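(* Let $R$ be a $*$-ring. Then $R$ is strongly $J$-$*$-clean if and only if (1) $R/J(R)$, with the induced involution $(a+J(R))^*=a^*+J(R)$, is $*$-Boolean; (2) $R$ is abelian; and (3) every idempotent lifts modulo $J(R)$.
   Context: All rings are associative with identity. A $*$-ring is a ring $R$ with an involution $*$, i.e. a map $a\mapsto a^*$ with $(a+b)^*=a^*+b^*$, $(ab)^*=b^*a^*$, $(a^* )^*=a$. $J(R)$ denotes the Jacobson radical of $R$; it satisfies $J(R)^*\subseteq J(R)$, so the quotient inherits an involution. A projection is an element $e$ with $e^2=e=e^*$. $R$ is strongly $J$-$*$-clean if every $a\in R$ can be written $a=e+u$ with $e$ a projection, $u\in J(R)$ and $ae=ea$. A $*$-ring is $*$-Boolean if every element is a projection. A ring is abelian if all its idempotents are central. Idempotents lift modulo $J(R)$ means: for every $x\in R$ with $x-x^2\in J(R)$ there is an idempotent $f\in R$ with $x-f\in J(R)$. *)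

theory Defs
  imports Main
begin

definition involution :: "('a::ring_1 \<Rightarrow> 'a) \<Rightarrow> bool" where
  "involution st \<longleftrightarrow>
     (\<forall>a b. st (a + b) = st a + st b) \<and>
     (\<forall>a b. st (a * b) = st b * st a) \<and>
     (\<forall>a. st (st a) = a)"

definition left_ideal :: "'a::ring_1 set \<Rightarrow> bool" where
  "left_ideal I \<longleftrightarrow> 0 \<in> I \<and> (\<forall>x\<in>I. \<forall>y\<in>I. x - y \<in> I) \<and> (\<forall>r. \<forall>x\<in>I. r * x \<in> I)"

definition maximal_left_ideal :: "'a::ring_1 set \<Rightarrow> bool" where
  "maximal_left_ideal I \<longleftrightarrow> left_ideal I \<and> I \<noteq> UNIV \<and>
     (\<forall>K. left_ideal K \<and> I \<subseteq> K \<and> K \<noteq> UNIV \<longrightarrow> K = I)"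

definition jacobson :: "'a::ring_1 set" where
  "jacobson = \<Inter> {I. maximal_left_ideal I}"

definition projection :: "('a::ring_1 \<Rightarrow> 'a) \<Rightarrow> 'a \<Rightarrow> bool" where
  "projection st e \<longleftrightarrow> e * e = e \<and> st e = e"

definition strongly_J_star_clean :: "('a::ring_1 \<Rightarrow> 'a) \<Rightarrow> bool" where
  "strongly_J_star_clean st \<longleftrightarrow>
     (\<forall>a. \<exists>e u. a = e + u \<and> projection st e \<and> u \<in> jacobson \<and> a * e = e * a)"

text \<open>R/J(R) with induced involution is *-Boolean: every coset a + J(R) is a projection,
  i.e. (a+J)(a+J) = a+J and (a+J)^* = a^* + J = a + J.\<close>
definition quotient_J_star_boolean :: "('a::ring_1 \<Rightarrow> 'a) \<Rightarrow> bool" where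
  "quotient_J_star_boolean st \<longleftrightarrow>
     (\<forall>a::'a. a * a - a \<in> jacobson \<and> st a - a \<in> jacobson)"

definition abelian_ring :: "'a::ring_1 itself \<Rightarrow> bool" where
  "abelian_ring _ \<longleftrightarrow> (\<forall>e::'a. e * e = e \<longrightarrow> (\<forall>x. e * x = x * e))"

definition idempotents_lift_mod_J :: "'a::ring_1 itself \<Rightarrow> bool" where
  "idempotents_lift_mod_J _ \<longleftrightarrow>
     (\<forall>x::'a. x - x * x \<in> jacobson \<longrightarrow> (\<exists>f. f * f = f \<and> x - f \<in> jacobson))"

end

theory Submission
  imports Defs
begin

lemma li_one: "left_ideal I \<Longrightarrow> 1 \<in> I \<Longrightarrow> I = UNIV"
  unfolding left_ideal_def by (metis UNIV_eq_I mult.right_neutral)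

lemma li_add: "left_ideal I \<Longrightarrow> x \<in> I \<Longrightarrow> y \<in> I \<Longrightarrow> x + y \<in> I"
  unfolding left_ideal_def by (metis diff_0 diff_minus_eq_add)

lemma li_neg: "left_ideal I \<Longrightarrow> x \<in> I \<Longrightarrow> - x \<in> I"
  unfolding left_ideal_def by (metis diff_0)

lemma li_diff: "left_ideal I \<Longrightarrow> x \<in> I \<Longrightarrow> y \<in> I \<Longrightarrow> x - y \<in> I"
  unfolding left_ideal_def by blast

lemma li_mult: "left_ideal I \<Longrightarrow> x \<in> I \<Longrightarrow> r * x \<in> I"
  unfolding left_ideal_def by blast

lemma J_li: "left_ideal (jacobson :: 'a::ring_1 set)"
  unfolding jacobson_def left_ideal_def maximal_left_ideal_def by auto

lemma J_in: "u \<in> jacobson \<Longrightarrow> maximal_left_ideal M \<Longrightarrow> u \<in> M"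
  unfolding jacobson_def by auto

lemma exists_max:
  fixes I :: "'a::ring_1 set"
  assumes I: "left_ideal I" and n: "1 \<notin> I"
  shows "\<exists>M. maximal_left_ideal M \<and> I \<subseteq> M"
proof -
  define A where "A = {K. left_ideal K \<and> I \<subseteq> K \<and> (1::'a) \<notin> K}"
  have "\<exists>M\<in>A. \<forall>X\<in>A. M \<subseteq> X \<longrightarrow> X = M"
  proof (rule subset_Zorn_nonempty)
    show "A \<noteq> {}" using I n A_def by auto
  next
    fix C assume C: "C \<noteq> {}" "subset.chain A C"
    then have CA: "C \<subseteq> A" and ch: "\<And>X Y. X \<in> C \<Longrightarrow> Y \<in> C \<Longrightarrow> X \<subseteq> Y \<or> Y \<subseteq> X"
      by (auto simp: subset.chain_def)
    have "left_ideal (\<Union>C)"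
      unfolding left_ideal_def
    proof (intro conjI ballI allI)
      from C obtain X where "X \<in> C" by auto
      then show "0 \<in> \<Union>C" using CA A_def left_ideal_def by blast
    next
      fix x y assume "x \<in> \<Union>C" "y \<in> \<Union>C"
      then obtain X Y where XY: "X \<in> C" "Y \<in> C" "x \<in> X" "y \<in> Y" by auto
      show "x - y \<in> \<Union>C"
      proof (cases "X \<subseteq> Y")
        case True
        then have "x - y \<in> Y" using XY CA A_def li_diff by blast
        then show ?thesis using XY by auto
      next
        case False
        then have "Y \<subseteq> X" using ch XY by blast
        then have "x - y \<in> X" using XY CA A_def li_diff by blast
        then show ?thesis using XY by auto
      qed
    next
      fix r x assume "x \<in> \<Union>C"
      then obtain X where "X \<in> C" "x \<in> X" by auto
      then show "r * x \<in> \<Union>C" using CA A_def li_mult by blast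
    qed
    moreover have "I \<subseteq> \<Union>C" using C CA A_def by auto
    moreover have "1 \<notin> \<Union>C" using CA A_def by auto
    ultimately show "\<Union>C \<in> A" using A_def by auto
  qed
  then obtain M where M: "M \<in> A" "\<forall>X\<in>A. M \<subseteq> X \<longrightarrow> X = M" by blast
  have "maximal_left_ideal M"
    unfolding maximal_left_ideal_def
  proof (intro conjI allI impI)
    show "left_ideal M" using M A_def by auto
    show "M \<noteq> UNIV" using M A_def by auto
    fix K assume K: "left_ideal K \<and> M \<subseteq> K \<and> K \<noteq> UNIV"
    then have "1 \<notin> K" using li_one by blast
    then have "K \<in> A" using K M A_def by auto
    then show "K = M" using M K by auto
  qed
  then show ?thesis using M A_def by auto
qed

lemma J_leftinv:
  fixes u :: "'a::ring_1"
  assumes u: "u \<in> jacobson"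
  shows "\<exists>v. v * (1 - u) = 1"
proof (rule ccontr)
  assume nv: "\<not> ?thesis"
  define L where "L = {r * (1 - u) | r. True}"
  have L: "left_ideal L" unfolding left_ideal_def
  proof (intro conjI ballI allI)
    have "0 = 0 * (1 - u)" by simp
    then show "0 \<in> L" unfolding L_def by blast
  next
    fix x y assume "x \<in> L" "y \<in> L"
    then obtain r1 r2 where xy: "x = r1 * (1 - u)" "y = r2 * (1 - u)" unfolding L_def by blast
    then have "x - y = (r1 - r2) * (1 - u)" by (simp add: left_diff_distrib)
    then show "x - y \<in> L" unfolding L_def by blast
  next
    fix r x assume "x \<in> L"
    then obtain r1 where x: "x = r1 * (1 - u)" unfolding L_def by blast
    then have "r * x = (r * r1) * (1 - u)" by (simp add: mult.assoc)
    then show "r * x \<in> L" unfolding L_def by blast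
  qed
  have "1 \<notin> L" using nv L_def by auto
  then obtain M where M: "maximal_left_ideal M" "L \<subseteq> M" using exists_max L by blast
  have Mli: "left_ideal M" using M(1) unfolding maximal_left_ideal_def by blast
  have "1 - u = 1 * (1 - u)" by simp
  then have "1 - u \<in> L" unfolding L_def by blast
  then have "1 - u \<in> M" using M(2) by blast
  moreover have "u \<in> M" using J_in u M by blast
  ultimately have "(1 - u) + u \<in> M" using li_add[OF Mli] by blast
  then have "1 \<in> M" by simp
  then show False using M li_one maximal_left_ideal_def by blast
qed

lemma J_inv:
  fixes u :: "'a::ring_1"
  assumes u: "u \<in> jacobson"
  shows "\<exists>v. v * (1 - u) = 1 \<and> (1 - u) * v = 1"
proof -
  obtain v where v: "v * (1 - u) = 1" using J_leftinv u by blast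
  have vv: "v = 1 - (- (v * u))" using v by (simp add: algebra_simps)
  have "- (v * u) \<in> jacobson" using u J_li li_mult li_neg by blast
  then obtain w where w: "w * (1 - (- (v * u))) = 1" using J_leftinv by blast
  then have wv: "w * v = 1" using vv by simp
  have "w = w * (v * (1 - u))" using v by simp
  also have "\<dots> = 1 - u" by (simp add: mult.assoc[symmetric] wv)
  finally show ?thesis using v wv by auto
qed

lemma J_cube:
  fixes d :: "'a::ring_1"
  assumes d: "d \<in> jacobson" and c: "d * d * d = d"
  shows "d = 0"
proof -
  have "d * d \<in> jacobson" using d J_li li_mult by blast
  then obtain v where v: "(1 - d * d) * v = 1" using J_inv by blast
  have "d * (1 - d * d) = 0" using c by (simp add: algebra_simps mult.assoc)
  then have "d * (1 - d * d) * v = 0" by simp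
  then show ?thesis using v by (simp add: mult.assoc)
qed

lemma J_char:
  fixes y :: "'a::ring_1"
  assumes h: "\<And>r. \<exists>v. v * (1 - r * y) = 1"
  shows "y \<in> jacobson"
  unfolding jacobson_def
proof (rule InterI, rule ccontr)
  fix M assume "M \<in> {I. maximal_left_ideal I}" and yM: "y \<notin> M"
  then have M: "maximal_left_ideal M" by auto
  have Mli: "left_ideal M" using M unfolding maximal_left_ideal_def by blast
  have MU: "M \<noteq> UNIV" using M unfolding maximal_left_ideal_def by blast
  have Mx: "\<And>K. left_ideal K \<Longrightarrow> M \<subseteq> K \<Longrightarrow> K \<noteq> UNIV \<Longrightarrow> K = M"
    using M unfolding maximal_left_ideal_def by blast
  have M0: "0 \<in> M" using Mli unfolding left_ideal_def by blast
  define K where "K = {m + r * y | m r. m \<in> M}"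
  have KL: "left_ideal K" unfolding left_ideal_def
  proof (intro conjI ballI allI)
    have "(0::'a) = 0 + 0 * y" by simp
    then show "0 \<in> K" unfolding K_def using M0 by blast
  next
    fix a b assume "a \<in> K" "b \<in> K"
    then obtain m1 r1 m2 r2 where "a = m1 + r1 * y" "b = m2 + r2 * y" "m1 \<in> M" "m2 \<in> M"
      unfolding K_def by auto
    then have "a - b = (m1 - m2) + (r1 - r2) * y" by (simp add: algebra_simps)
    moreover have "m1 - m2 \<in> M" using li_diff[OF Mli] \<open>m1 \<in> M\<close> \<open>m2 \<in> M\<close> by blast
    ultimately show "a - b \<in> K" unfolding K_def by blast
  next
    fix s a assume "a \<in> K"
    then obtain m1 r1 where "a = m1 + r1 * y" "m1 \<in> M" unfolding K_def by auto
    then have "s * a = s * m1 + (s * r1) * y" by (simp add: algebra_simps)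
    moreover have "s * m1 \<in> M" using li_mult[OF Mli] \<open>m1 \<in> M\<close> by blast
    ultimately show "s * a \<in> K" unfolding K_def by blast
  qed
  have "M \<subseteq> K"
  proof
    fix m assume "m \<in> M"
    moreover have "m = m + 0 * y" by simp
    ultimately show "m \<in> K" unfolding K_def by blast
  qed
  moreover have "y = 0 + 1 * y" by simp
  then have "y \<in> K" unfolding K_def using M0 by blast
  ultimately have "K = UNIV" using Mx KL yM by blast
  then obtain m r where mr: "1 = m + r * y" "m \<in> M" unfolding K_def by blast
  then have "m = 1 - r * y" by (simp add: algebra_simps)
  moreover obtain v where "v * (1 - r * y) = 1" using h by blast
  ultimately have "1 \<in> M" using li_mult[OF Mli mr(2), of v] by simp
  then show False using li_one Mli MU by blast
qed

lemma inv_basic: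
  assumes "involution st"
  shows "st 1 = 1" "st 0 = 0" "\<And>x. st (- x) = - st x" "\<And>x y. st (x - y) = st x - st y"
    "\<And>x y. st (x * y) = st y * st x" "\<And>x. st (st x) = x" "\<And>x y. st (x + y) = st x + st y"
proof -
  have a: "\<And>x y. st (x + y) = st x + st y" and m: "\<And>x y. st (x * y) = st y * st x"
    and i: "\<And>x. st (st x) = x" using assms unfolding involution_def by auto
  show "\<And>x y. st (x * y) = st y * st x" "\<And>x. st (st x) = x" "\<And>x y. st (x + y) = st x + st y"
    using a m i by auto
  have "st (st 1 * 1) = st 1 * st (st 1)" by (rule m)
  then show "st 1 = 1" using i by simp
  have "st 0 = st (0 + 0)" by simp
  then show z: "st 0 = 0" using a[of 0 0] by simp
  have n: "\<And>x. st (- x) = - st x"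
  proof -
    fix x
    have "st (- x) + st x = 0" using a[of "-x" x] z by simp
    then show "st (- x) = - st x" by (simp add: eq_neg_iff_add_eq_0)
  qed
  then show "\<And>x. st (- x) = - st x" .
  show "\<And>x y. st (x - y) = st x - st y" using a n by (metis diff_conv_add_uminus)
qed

lemma J_star:
  fixes u :: "'a::ring_1"
  assumes inv: "involution st" and u: "u \<in> jacobson"
  shows "st u \<in> jacobson"
proof (rule J_char)
  fix r
  define s where "s = st r"
  have "s * u \<in> jacobson" using u J_li li_mult by blast
  then obtain w where w1: "w * (1 - s * u) = 1" and w2: "(1 - s * u) * w = 1" using J_inv by blast
  have w2': "w - s * u * w = 1" using w2 by (simp add: algebra_simps)
  define t where "t = 1 + u * w * s"
  have "(1 - u * s) * t = 1 - u * s + u * (w - s * u * w) * s"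
    unfolding t_def by (simp add: algebra_simps mult.assoc)
  also have "\<dots> = 1" using w2' by simp
  finally have "(1 - u * s) * t = 1" .
  then have "st ((1 - u * s) * t) = 1" using inv_basic[OF inv] by simp
  then have "st t * (1 - r * st u) = 1" using inv_basic[OF inv] s_def by simp
  then show "\<exists>v. v * (1 - r * st u) = 1" by blast
qed

lemma comm_idem_cube:
  fixes e f :: "'a::ring_1"
  assumes ee: "e * e = e" and ff: "f * f = f" and c: "e * f = f * e"
  shows "(f - e) * (f - e) * (f - e) = f - e"
proof -
  have h1: "e * (f * f) = e * f" using ff by simp
  have h2: "e * (f * e) = e * f" using ee c by (metis mult.assoc)
  have fe: "f * e = e * f" using c by simp
  have h3: "e * (e * f) = e * f" using ee by (metis mult.assoc)
  have "(f - e) * (f - e) = f * f - f * e - e * f + e * e"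
    by (simp add: algebra_simps)
  also have "\<dots> = f - e * f - e * f + e"
    by (simp only: ee ff fe)
  finally have s1: "(f - e) * (f - e) = f - e * f - e * f + e" .
  have "(f - e * f - e * f + e) * (f - e) =
      f * f - f * e - e * (f * f) + e * (f * e) - e * (f * f) + e * (f * e) + e * f - e * e"
    by (simp add: algebra_simps)
  also have "\<dots> = f - e * f - e * f + e * f - e * f + e * f + e * f - e"
    by (simp only: ee ff h1 h2 h3 fe)
  also have "\<dots> = f - e" by (simp add: algebra_simps)
  finally show ?thesis using s1 by simp
qed

lemma proj_abelian:
  fixes f x :: "'a::ring_1"
  assumes inv: "involution st" and P0: "\<forall>g::'a. g * g = g \<longrightarrow> st g = g" and f: "f * f = f"
  shows "f * x = x * f"
proof -
  have P: "\<And>g::'a. g * g = g \<Longrightarrow> st g = g" using P0 by blast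
  note B = inv_basic[OF inv]
  have f1: "f * (1 - f) = 0" "(1 - f) * f = 0" using f by (simp_all add: algebra_simps)
  define y where "y = f * x * (1 - f)"
  have yf: "y * f = 0" unfolding y_def using f1 by (simp add: mult.assoc)
  have fy: "f * y = y" unfolding y_def using f by (simp add: mult.assoc[symmetric])
  have "y * y = f * x * ((1 - f) * f) * x * (1 - f)" unfolding y_def by (simp add: mult.assoc)
  then have yy: "y * y = 0" using f1 by simp
  have "(f + y) * (f + y) = f * f + f * y + y * f + y * y" by (simp add: algebra_simps)
  also have "\<dots> = f + y" using f fy yf yy by simp
  finally have "st (f + y) = f + y" using P by blast
  then have "st y = y" using B P f by simp
  then have "y = (1 - f) * st x * f" unfolding y_def using B P f by (simp add: mult.assoc)
  then have "f * y = 0" using f1 by (simp add: mult.assoc[symmetric])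
  then have y0: "y = 0" using fy by simp
  define z where "z = (1 - f) * x * f"
  have zf: "z * f = z" unfolding z_def using f by (simp add: mult.assoc)
  have fz: "f * z = 0" unfolding z_def using f1 by (simp add: mult.assoc[symmetric])
  have "z * z = (1 - f) * x * (f * (1 - f)) * x * f" unfolding z_def by (simp add: mult.assoc)
  then have zz: "z * z = 0" using f1 by simp
  have "(f + z) * (f + z) = f * f + f * z + z * f + z * z" by (simp add: algebra_simps)
  also have "\<dots> = f + z" using f fz zf zz by simp
  finally have "st (f + z) = f + z" using P by blast
  then have "st z = z" using B P f by simp
  then have "z = f * st x * (1 - f)" unfolding z_def using B P f by (simp add: mult.assoc)
  then have "z * f = 0" using f1 by (simp add: mult.assoc)
  then have z0: "z = 0" using zf by simp
  have "f * x * (1 - f) = f * x - f * x * f" by (simp add: algebra_simps)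
  then have "f * x = f * x * f" using y0 unfolding y_def by simp
  moreover have "(1 - f) * x * f = x * f - f * x * f" by (simp add: algebra_simps)
  then have "x * f = f * x * f" using z0 unfolding z_def by simp
  ultimately show ?thesis by simp
qed

theorem corollary3p8:
  fixes st :: "'a::ring_1 \<Rightarrow> 'a"
  assumes "involution st"
  shows "strongly_J_star_clean st \<longleftrightarrow>
           quotient_J_star_boolean st \<and> abelian_ring TYPE('a) \<and> idempotents_lift_mod_J TYPE('a)"
proof
  note B = inv_basic[OF assms]
  note JL = J_li[where 'a='a]
  assume sc: "strongly_J_star_clean st"
  have dec: "\<And>a. \<exists>e u. a = e + u \<and> e * e = e \<and> st e = e \<and> u \<in> jacobson \<and> u * e = e * u"
  proof -
    fix a :: 'a
    obtain e u where h: "a = e + u" "projection st e" "u \<in> jacobson" "a * e = e * a"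
      using sc unfolding strongly_J_star_clean_def by blast
    have "u * e = e * u" using h(1,4) by (simp add: algebra_simps)
    then show "?thesis a" using h projection_def by blast
  qed
  have q: "quotient_J_star_boolean st"
    unfolding quotient_J_star_boolean_def
  proof
    fix a :: 'a
    obtain e u where h: "a = e + u" "e * e = e" "st e = e" "u \<in> jacobson" "u * e = e * u"
      using dec by blast
    have "a * a - a = (e + e + u - 1) * u" using h by (simp add: algebra_simps)
    then have 1: "a * a - a \<in> jacobson" using li_mult[OF JL h(4)] by simp
    have "st a - a = st u - u" using h B by simp
    then have "st a - a \<in> jacobson" using li_diff[OF JL J_star[OF assms h(4)] h(4)] by simp
    with 1 show "a * a - a \<in> jacobson \<and> st a - a \<in> jacobson" by blast
  qed
  have P: "\<And>g::'a. g * g = g \<Longrightarrow> st g = g"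
  proof -
    fix g :: 'a assume g: "g * g = g"
    obtain e u where h: "g = e + u" "e * e = e" "st e = e" "u \<in> jacobson" "u * e = e * u"
      using dec by blast
    have ge: "e * g = g * e" using h by (simp add: algebra_simps)
    have "u = g - e" using h by simp
    then have "u * u * u = u" using comm_idem_cube[OF h(2) g ge] by simp
    then have "u = 0" using J_cube h(4) by blast
    then show "st g = g" using h by simp
  qed
  have ab: "abelian_ring TYPE('a)" unfolding abelian_ring_def
  proof (intro allI impI)
    fix e x :: 'a assume "e * e = e"
    moreover have "\<forall>g::'a. g * g = g \<longrightarrow> st g = g" using P by blast
    ultimately show "e * x = x * e" using proj_abelian[OF assms] by blast
  qed
  have lf: "idempotents_lift_mod_J TYPE('a)" unfolding idempotents_lift_mod_J_def
  proof (intro allI impI)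
    fix x :: 'a
    obtain e u where h: "x = e + u" "e * e = e" "st e = e" "u \<in> jacobson" "u * e = e * u"
      using dec by blast
    then have "x - e = u" by simp
    then show "\<exists>f. f * f = f \<and> x - f \<in> jacobson" using h by blast
  qed
  show "quotient_J_star_boolean st \<and> abelian_ring TYPE('a) \<and> idempotents_lift_mod_J TYPE('a)"
    using q ab lf by blast
next
  note B = inv_basic[OF assms]
  note JL = J_li[where 'a='a]
  assume "quotient_J_star_boolean st \<and> abelian_ring TYPE('a) \<and> idempotents_lift_mod_J TYPE('a)"
  then have q: "\<And>a::'a. a * a - a \<in> jacobson \<and> st a - a \<in> jacobson"
    and ab: "\<And>e x::'a. e * e = e \<Longrightarrow> e * x = x * e"
    and lf: "\<And>x::'a. x - x * x \<in> jacobson \<Longrightarrow> \<exists>f. f * f = f \<and> x - f \<in> jacobson"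
    unfolding quotient_J_star_boolean_def abelian_ring_def idempotents_lift_mod_J_def by blast+
  show "strongly_J_star_clean st" unfolding strongly_J_star_clean_def
  proof
    fix a :: 'a
    have "- (a * a - a) \<in> jacobson" using q li_neg[OF JL] by blast
    then have "a - a * a \<in> jacobson" by simp
    then obtain f where f: "f * f = f" "a - f \<in> jacobson" using lf by blast
    have sf: "st f * st f = st f" using B f by (metis)
    have c: "f * st f = st f * f" using ab f by blast
    have "(st f - f) * (st f - f) * (st f - f) = st f - f"
      using comm_idem_cube[OF f(1) sf c] .
    then have "st f - f = 0" using J_cube q by blast
    then have "st f = f" by simp
    then have "projection st f" using f projection_def by blast
    moreover have "a * f = f * a" using ab f by metis
    moreover have "a = f + (a - f)" by simp
    ultimately show "\<exists>e u. a = e + u \<and> projection st e \<and> u \<in> jacobson \<and> a * e = e * a"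
      using f(2) by blast
  qed
qed

end
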